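(* For every positive integer $n$: (a) $\displaystyle cl_b(n)=\sum_{k=0}^{n-1}cl_b(k)\big(1-\vartheta_2(n-k)\big)$; (b) $\displaystyle\sum_{k=0}^{n}cl_b(k)\big(1-h(n-k)\big)=1$, with $h(0)=0$.
   Context: A Carlitz-binary composition of $m$ is an ordered sequence of powers of $2$ (including $1$) summing to $m$ in which each part differs from its adjacent parts. $cl_b(m)$ is the number of Carlitz-binary compositions of $m$, with $cl_b(0)=1$. $\vartheta_2$ is the $2$-adic valuation and $h(m)$ is the number of ones in the binary representation of $m$. *)

theory Defs
  imports "HOL-Computational_Algebra.Primes"
begin

definition carlitz_binary_comps :: "nat \<Rightarrow> nat list set" where
  "carlitz_binary_comps m =
     {xs. (\<forall>x\<in>set xs. \<exists>j. x = 2 ^ j) \<and> sum_list xs = m \<and>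
          (\<forall>i. Suc i < length xs \<longrightarrow> xs ! i \<noteq> xs ! Suc i)}"

definition cl_b :: "nat \<Rightarrow> nat" where
  "cl_b m = card (carlitz_binary_comps m)"

definition theta2 :: "nat \<Rightarrow> nat" where
  "theta2 n = multiplicity (2::nat) n"

fun h :: "nat \<Rightarrow> nat" where
  "h n = (if n = 0 then 0 else n mod 2 + h (n div 2))"

end

theory Submission
  imports Defs
begin

lemma adj_cons2: "(\<forall>i. Suc i < length (x#y#ys) \<longrightarrow> (x#y#ys)!i \<noteq> (x#y#ys)!Suc i) \<longleftrightarrow>
   x \<noteq> y \<and> (\<forall>i. Suc i < length (y#ys) \<longrightarrow> (y#ys)!i \<noteq> (y#ys)!Suc i)"
proof
  assume H: "\<forall>i. Suc i < length (x#y#ys) \<longrightarrow> (x#y#ys)!i \<noteq> (x#y#ys)!Suc i"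
  have "x \<noteq> y" using H[rule_format, of 0] by simp
  moreover have "\<forall>i. Suc i < length (y#ys) \<longrightarrow> (y#ys)!i \<noteq> (y#ys)!Suc i"
  proof (intro allI impI)
    fix i assume "Suc i < length (y#ys)"
    then show "(y#ys)!i \<noteq> (y#ys)!Suc i" using H[rule_format, of "Suc i"] by simp
  qed
  ultimately show "x \<noteq> y \<and> (\<forall>i. Suc i < length (y#ys) \<longrightarrow> (y#ys)!i \<noteq> (y#ys)!Suc i)" ..
next
  assume H: "x \<noteq> y \<and> (\<forall>i. Suc i < length (y#ys) \<longrightarrow> (y#ys)!i \<noteq> (y#ys)!Suc i)"
  show "\<forall>i. Suc i < length (x#y#ys) \<longrightarrow> (x#y#ys)!i \<noteq> (x#y#ys)!Suc i"
  proof (intro allI impI)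
    fix i assume i: "Suc i < length (x#y#ys)"
    show "(x#y#ys)!i \<noteq> (x#y#ys)!Suc i"
    proof (cases i)
      case 0 then show ?thesis using H by simp
    next
      case (Suc k) then show ?thesis using H i by simp
    qed
  qed
qed

lemma adj_succ: "(\<forall>i. Suc i < length xs \<longrightarrow> xs ! i \<noteq> xs ! Suc i) \<longleftrightarrow> successively (\<noteq>) xs"
proof (induction xs)
  case Nil then show ?case by simp
next
  case (Cons x xs)
  show ?case
  proof (cases xs)
    case Nil then show ?thesis by simp
  next
    case (Cons y ys)
    then show ?thesis using Cons.IH by (simp only: adj_cons2 successively.simps)
  qed
qed

lemma comps_def2: "carlitz_binary_comps m =
     {xs. (\<forall>x\<in>set xs. \<exists>j. x = 2 ^ j) \<and> sum_list xs = m \<and> successively (\<noteq>) xs}"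
  unfolding carlitz_binary_comps_def adj_succ ..

lemma len_le_sum: "\<forall>x\<in>set xs. (x::nat) \<ge> 1 \<Longrightarrow> length xs \<le> sum_list xs"
  by (induction xs) auto

lemma pow_ge1: "\<forall>x\<in>set xs. \<exists>j. x = (2::nat) ^ j \<Longrightarrow> \<forall>x\<in>set xs. x \<ge> 1"
  by auto

lemma fin_comps: "finite (carlitz_binary_comps n)"
proof (rule finite_subset)
  show "carlitz_binary_comps n \<subseteq> {xs. set xs \<subseteq> {0..n} \<and> length xs \<le> n}"
  proof
    fix xs assume "xs \<in> carlitz_binary_comps n"
    then have P: "\<forall>x\<in>set xs. \<exists>j. x = (2::nat) ^ j" and S: "sum_list xs = n"
      unfolding comps_def2 by blast+
    have "length xs \<le> n" using len_le_sum[OF pow_ge1[OF P]] S by simp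
    moreover have "set xs \<subseteq> {0..n}" using member_le_sum_list[of _ xs] S by auto
    ultimately show "xs \<in> {xs. set xs \<subseteq> {0..n} \<and> length xs \<le> n}" by blast
  qed
  show "finite {xs. set xs \<subseteq> {0..n} \<and> length xs \<le> n}"
    by (rule finite_lists_length_le) simp
qed

lemma comps0: "carlitz_binary_comps 0 = {[]}"
proof
  show "carlitz_binary_comps 0 \<subseteq> {[]}"
  proof
    fix xs assume "xs \<in> carlitz_binary_comps 0"
    then have P: "\<forall>x\<in>set xs. \<exists>j. x = (2::nat) ^ j" and S: "sum_list xs = 0"
      unfolding comps_def2 by blast+
    have "length xs \<le> 0" using len_le_sum[OF pow_ge1[OF P]] S by simp
    then show "xs \<in> {[]}" by simp
  qed
  show "{[]} \<subseteq> carlitz_binary_comps 0" unfolding comps_def2 by simp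
qed

lemma cons_in: "(s # ys) \<in> carlitz_binary_comps n \<longleftrightarrow>
   (\<exists>j. s = 2^j) \<and> s \<le> n \<and> ys \<in> carlitz_binary_comps (n - s) \<and> (ys = [] \<or> hd ys \<noteq> s)"
  unfolding comps_def2 by (auto simp: successively_Cons)

definition A :: "nat \<Rightarrow> nat \<Rightarrow> nat" where
  "A s n = card {xs \<in> carlitz_binary_comps n. xs \<noteq> [] \<and> hd xs = s}"

lemma A_big: assumes "n < s" shows "A s n = 0"
proof -
  have "xs \<notin> carlitz_binary_comps n" if ne: "xs \<noteq> []" and hd: "hd xs = s" for xs
  proof -
    obtain ys where "xs = s # ys" using ne hd by (cases xs) auto
    then show ?thesis using assms by (simp add: cons_in)
  qed
  then have E: "{xs \<in> carlitz_binary_comps n. xs \<noteq> [] \<and> hd xs = s} = {}" by blast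
  show ?thesis by (simp only: A_def E card.empty)
qed

lemma A_rec: assumes "s = 2^j" "s \<le> n" shows "A s n + A s (n - s) = cl_b (n - s)"
proof -
  let ?S = "{xs \<in> carlitz_binary_comps n. xs \<noteq> [] \<and> hd xs = s}"
  let ?T = "{ys \<in> carlitz_binary_comps (n-s). ys = [] \<or> hd ys \<noteq> s}"
  let ?U = "{ys \<in> carlitz_binary_comps (n-s). ys \<noteq> [] \<and> hd ys = s}"
  have "?S = (Cons s) ` ?T"
  proof
    show "?S \<subseteq> (Cons s) ` ?T"
    proof
      fix xs assume xs: "xs \<in> ?S"
      then obtain ys where ys: "xs = s # ys" by (cases xs) auto
      with xs have "ys \<in> ?T" by (simp add: cons_in)
      with ys show "xs \<in> (Cons s) ` ?T" by blast
    qed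
    show "(Cons s) ` ?T \<subseteq> ?S"
    proof
      fix xs assume "xs \<in> (Cons s) ` ?T"
      then obtain ys where ys: "xs = s # ys" "ys \<in> ?T" by blast
      then have "s # ys \<in> carlitz_binary_comps n" using assms by (simp add: cons_in)
      with ys show "xs \<in> ?S" by simp
    qed
  qed
  then have "card ?S = card ?T" by (simp add: card_image)
  moreover have "carlitz_binary_comps (n-s) = ?T \<union> ?U" by blast
  moreover have "card (?T \<union> ?U) = card ?T + card ?U"
    by (rule card_Un_disjoint) (auto intro: finite_subset[OF _ fin_comps])
  ultimately show ?thesis unfolding A_def cl_b_def by simp
qed

lemma cl_sum: assumes "n \<ge> 1" shows "cl_b n = (\<Sum>i<n. A (2^i) n)"
proof -
  have "carlitz_binary_comps n = (\<Union>i<n. {xs \<in> carlitz_binary_comps n. xs \<noteq> [] \<and> hd xs = 2^i})"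
  proof (rule subset_antisym)
    show "(\<Union>i<n. {xs \<in> carlitz_binary_comps n. xs \<noteq> [] \<and> hd xs = 2^i}) \<subseteq> carlitz_binary_comps n" by blast
    show "carlitz_binary_comps n \<subseteq> (\<Union>i<n. {xs \<in> carlitz_binary_comps n. xs \<noteq> [] \<and> hd xs = 2^i})"
    proof
    fix xs assume xs: "xs \<in> carlitz_binary_comps n"
    then have "xs \<noteq> []" using assms by (auto simp: comps_def2)
    then obtain y ys where "xs = y # ys" by (cases xs) auto
    with xs obtain j where "y = 2^j" "2^j \<le> n" by (auto simp: cons_in)
    moreover have "j < n" using less_exp[of j] \<open>2^j \<le> n\<close> by linarith
    ultimately show "xs \<in> (\<Union>i<n. {xs \<in> carlitz_binary_comps n. xs \<noteq> [] \<and> hd xs = 2^i})"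
      using xs \<open>xs = y # ys\<close> by auto
    qed
  qed
  then have "cl_b n = card (\<Union>i<n. {xs \<in> carlitz_binary_comps n. xs \<noteq> [] \<and> hd xs = 2^i})"
    unfolding cl_b_def by simp
  also have "\<dots> = (\<Sum>i<n. A (2^i) n)" unfolding A_def
    by (rule card_UN_disjoint) (auto intro: finite_subset[OF _ fin_comps])
  finally show ?thesis .
qed

lemma A_formula: assumes "s = 2^j"
  shows "int (A s n) = (\<Sum>k < n div s. (-1)^k * int (cl_b (n - (k+1)*s)))"
proof (induction n rule: less_induct)
  case (less n)
  have s1: "s \<ge> 1" using assms by simp
  show ?case
  proof (cases "n < s")
    case True then show ?thesis by (simp add: A_big)
  next
    case False
    then have nd: "n div s = Suc ((n - s) div s)" using s1
      by (simp add: le_div_geq)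
    have "int (A s n) = int (cl_b (n - s)) - int (A s (n - s))"
    proof -
      have "A s n + A s (n - s) = cl_b (n - s)" using A_rec[OF assms] False by simp
      then show ?thesis by linarith
    qed
    also have "int (A s (n - s)) = (\<Sum>k < (n-s) div s. (-1)^k * int (cl_b (n - s - (k+1)*s)))"
      using less.IH[of "n-s"] False s1 by simp
    finally have F: "int (A s n) = int (cl_b (n - s)) - (\<Sum>k < (n-s) div s. (-1)^k * int (cl_b (n - s - (k+1)*s)))" .
    have eq: "\<And>k. n - (Suc k + 1)*s = n - s - (k+1)*s" by (simp add: diff_diff_add)
    have G: "(\<Sum>k<(n-s) div s. (-1)^Suc k * int (cl_b (n - (Suc k + 1)*s))) =
        (\<Sum>k<(n-s) div s. - ((-1)^k * int (cl_b (n - s - (k+1)*s))))"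
      by (intro sum.cong refl) (simp only: eq power_Suc; simp)
    show ?thesis unfolding nd sum.lessThan_Suc_shift G sum_negf F
      by simp
  qed
qed

lemma ind_sum: "v < n \<Longrightarrow> (\<Sum>i<n. (if i < v then -1 else if i = v then 1 else 0) :: int) = 1 - int v"
proof (induction n)
  case 0 then show ?case by simp
next
  case (Suc n)
  show ?case
  proof (cases "v < n")
    case True then show ?thesis using Suc by simp
  next
    case False
    then have "v = n" using Suc.prems by simp
    have "(\<Sum>i<n. (if i < v then -1 else if i = v then 1 else 0) :: int) = (\<Sum>i<n. -1)"
      by (rule sum.cong) (simp_all add: \<open>v = n\<close>)
    then show ?thesis using \<open>v = n\<close> by simp
  qed
qed

lemma odd_pred_aux: "even (e::nat) \<Longrightarrow> e \<ge> 1 \<Longrightarrow> odd (e - 1)" by presburger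
lemma even_pred_aux: "odd (e::nat) \<Longrightarrow> even (e - 1)" by presburger

lemma inner: assumes "1 \<le> m" "m \<le> n"
  shows "(\<Sum>i<n. (if (2::nat)^i dvd m then (-1)^(m div 2^i - 1) else 0) :: int) = 1 - int (theta2 m)"
proof -
  define v where "v = multiplicity (2::nat) m"
  have m0: "m \<noteq> 0" using assms by simp
  have nu: "\<not> is_unit (2::nat)" by simp
  obtain q where mq: "m = 2 ^ v * q" and oq: "\<not> 2 dvd q"
    using multiplicity_decompose'[OF m0 nu] unfolding v_def by blast
  have q1: "q \<ge> 1" using oq by (cases q) auto
  have "2^v \<le> m" using mq q1 by simp
  then have vn: "v < n" using less_exp[of v] assms by linarith
  have dv: "(2::nat)^i dvd m \<longleftrightarrow> i \<le> v" for i
    unfolding v_def by (rule power_dvd_iff_le_multiplicity) (use m0 in auto)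
  have pt: "(if (2::nat)^i dvd m then (-1)^(m div 2^i - 1) else 0 :: int) =
        (if i < v then -1 else if i = v then 1 else 0)" for i
  proof (cases "i \<le> v")
    case False then show ?thesis using dv[of i] by simp
  next
    case True
    have pv: "(2::nat)^v = 2^i * 2^(v-i)" using True by (simp add: power_add[symmetric])
    have md: "m div 2^i = 2^(v-i) * q"
      unfolding mq pv by (simp add: mult.assoc)
    show ?thesis
    proof (cases "i < v")
      case True
      then have "even (m div 2^i)" unfolding md by simp
      moreover have "m div 2^i \<ge> 1" unfolding md using q1 by simp
      ultimately have "odd (m div 2^i - 1)" using odd_pred_aux by blast
      then show ?thesis using True dv[of i] by simp
    next
      case False
      then have "i = v" using \<open>i \<le> v\<close> by simp
      then have "m div 2^i = q" unfolding md by simp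
      then have "even (m div 2^i - 1)" using oq q1 even_pred_aux by simp
      then show ?thesis using \<open>i = v\<close> dv[of i] by simp
    qed
  qed
  have "(\<Sum>i<n. (if (2::nat)^i dvd m then (-1)^(m div 2^i - 1) else 0) :: int)
      = (\<Sum>i<n. (if i < v then -1 else if i = v then 1 else 0))"
    by (rule sum.cong) (simp_all only: pt)
  also have "\<dots> = 1 - int v" by (rule ind_sum[OF vn])
  finally show ?thesis unfolding theta2_def v_def .
qed

lemma reidx: fixes p :: nat and g :: "nat \<Rightarrow> int" assumes "p > 0"
  shows "(\<Sum>j<n div p. (-1)^j * g (n - (j+1)*p)) =
         (\<Sum>m\<in>{1..n}. if p dvd m then (-1)^(m div p - 1) * g (n - m) else 0)"
proof -
  have "(\<Sum>m\<in>{1..n}. if p dvd m then (-1)^(m div p - 1) * g (n - m) else 0) =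
        (\<Sum>m\<in>{m\<in>{1..n}. p dvd m}. (-1)^(m div p - 1) * g (n - m))"
    by (rule sum.inter_filter[symmetric]) simp
  also have "\<dots> = (\<Sum>j<n div p. (-1)^j * g (n - (j+1)*p))"
  proof (rule sum.reindex_bij_witness[where i = "\<lambda>j. (j+1)*p" and j = "\<lambda>m. m div p - 1"])
    fix m assume "m \<in> {m\<in>{1..n}. p dvd m}"
    then have m: "1 \<le> m" "m \<le> n" "p dvd m" by auto
    then obtain r where r: "m = p * r" by blast
    with m have r1: "r \<ge> 1" by (cases r) auto
    have mdp: "m div p = r" using r assms by simp
    have e: "(m div p - 1 + 1) * p = m" using mdp r r1 by simp
    show "(m div p - 1 + 1) * p = m" by (rule e)
    show "(-1)^(m div p - 1) * g (n - (m div p - 1 + 1)*p) = (-1)^(m div p - 1) * g (n - m)"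
      using e by simp
    have "r \<le> n div p" using m(2) r assms
      by (metis div_le_mono nonzero_mult_div_cancel_left not_gr0 bot_nat_0.not_eq_extremum)
    then show "m div p - 1 \<in> {..<n div p}" using mdp r1 by simp
  next
    fix j assume "j \<in> {..<n div p}"
    then have j: "j + 1 \<le> n div p" by simp
    have "(j+1) * p \<le> (n div p) * p" using mult_le_mono1[OF j] .
    also have "\<dots> \<le> n" by simp
    finally have le: "(j+1)*p \<le> n" .
    show "(j+1)*p div p - 1 = j" using assms by simp
    show "(j+1)*p \<in> {m\<in>{1..n}. p dvd m}" using le assms by simp
  qed
  finally show ?thesis by simp
qed

lemma part_a: assumes "n \<ge> 1"
  shows "int (cl_b n) = (\<Sum>k<n. int (cl_b k) * (1 - int (theta2 (n - k))))"
proof -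
  let ?c = "\<lambda>k. int (cl_b k)"
  have "int (cl_b n) = (\<Sum>i<n. int (A (2^i) n))" using cl_sum[OF assms] by simp
  also have "\<dots> = (\<Sum>i<n. \<Sum>j<n div 2^i. (-1)^j * ?c (n - (j+1)*2^i))"
    by (rule sum.cong) (simp_all only: A_formula[OF refl])
  also have "\<dots> = (\<Sum>i<n. \<Sum>m\<in>{1..n}. if (2::nat)^i dvd m then (-1)^(m div 2^i - 1) * ?c (n - m) else 0)"
    by (rule sum.cong[OF refl], rule reidx) simp
  also have "\<dots> = (\<Sum>m\<in>{1..n}. \<Sum>i<n. if (2::nat)^i dvd m then (-1)^(m div 2^i - 1) * ?c (n - m) else 0)"
    by (rule sum.swap)
  also have "\<dots> = (\<Sum>m\<in>{1..n}. ?c (n - m) * (1 - int (theta2 m)))"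
  proof (rule sum.cong[OF refl])
    fix m assume m: "m \<in> {1..n}"
    have "(\<Sum>i<n. if (2::nat)^i dvd m then (-1)^(m div 2^i - 1) * ?c (n - m) else 0) =
          ?c (n - m) * (\<Sum>i<n. (if (2::nat)^i dvd m then (-1)^(m div 2^i - 1) else 0))"
      unfolding sum_distrib_left by (rule sum.cong) auto
    also have "\<dots> = ?c (n - m) * (1 - int (theta2 m))" using m inner[of m n] by simp
    finally show "(\<Sum>i<n. if (2::nat)^i dvd m then (-1)^(m div 2^i - 1) * ?c (n - m) else 0) =
          ?c (n - m) * (1 - int (theta2 m))" .
  qed
  also have "\<dots> = (\<Sum>k<n. ?c k * (1 - int (theta2 (n - k))))"
    by (rule sum.reindex_bij_witness[where i = "\<lambda>k. n - k" and j = "\<lambda>m. n - m"]) auto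
  finally show ?thesis .
qed

lemma theta_odd: "odd n \<Longrightarrow> theta2 n = 0"
  unfolding theta2_def by (rule not_dvd_imp_multiplicity_0) simp

lemma theta_double: "k \<noteq> 0 \<Longrightarrow> theta2 (2 * k) = Suc (theta2 k)"
  unfolding theta2_def by (rule multiplicity_times_same) simp_all

declare h.simps[simp del]
lemma h0[simp]: "h 0 = 0" by (subst h.simps) simp
lemma h_odd: "h (2*k+1) = 1 + h k" by (subst h.simps) simp
lemma h_even: "h (2*k) = h k" by (subst h.simps) simp

lemma h_step: "n \<ge> 1 \<Longrightarrow> h n + theta2 n = h (n - 1) + 1"
proof (induction n rule: less_induct)
  case (less n)
  show ?case
  proof (cases "even n")
    case False
    then obtain k where k: "n = 2*k + 1" using oddE by blast
    have "h n = 1 + h k" unfolding k by (rule h_odd)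
    moreover have "h (n - 1) = h k" unfolding k using h_even[of k] by simp
    ultimately show ?thesis using theta_odd[OF False] by simp
  next
    case True
    then obtain k where k: "n = 2*k" by blast
    with less.prems have k1: "k \<ge> 1" by simp
    have "h n = h k" unfolding k by (rule h_even)
    moreover have "h (n - 1) = 1 + h (k - 1)"
    proof -
      have "n - 1 = 2 * (k - 1) + 1" using k k1 by simp
      then show ?thesis using h_odd[of "k-1"] by simp
    qed
    moreover have "theta2 n = Suc (theta2 k)" unfolding k using k1 by (simp add: theta_double)
    moreover have "h k + theta2 k = h (k - 1) + 1" using less.IH[of k] k k1 by simp
    ultimately show ?thesis by simp
  qed
qed

lemma part_b: "(\<Sum>k=0..n. int (cl_b k) * (1 - int (h (n - k)))) = 1"
proof (induction n)
  case 0 then show ?case by (simp add: cl_b_def comps0)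
next
  case (Suc n)
  let ?c = "\<lambda>k. int (cl_b k)"
  have hs: "int (h (Suc n - k)) = int (h (n - k)) + 1 - int (theta2 (Suc n - k))" if "k \<le> n" for k
  proof -
    have "h (Suc n - k) + theta2 (Suc n - k) = h (Suc n - k - 1) + 1" using h_step[of "Suc n - k"] that by simp
    moreover have "Suc n - k - 1 = n - k" by simp
    ultimately show ?thesis by simp
  qed
  have "(\<Sum>k=0..Suc n. ?c k * (1 - int (h (Suc n - k)))) = ?c (Suc n) + (\<Sum>k=0..n. ?c k * (1 - int (h (Suc n - k))))"
    by (simp add: sum.atLeast0_atMost_Suc)
  also have "(\<Sum>k=0..n. ?c k * (1 - int (h (Suc n - k)))) =
      (\<Sum>k=0..n. ?c k * (1 - int (h (n - k)))) - (\<Sum>k=0..n. ?c k * (1 - int (theta2 (Suc n - k))))"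
    unfolding sum_subtractf[symmetric]
    by (rule sum.cong) (simp_all add: hs algebra_simps)
  also have "(\<Sum>k=0..n. ?c k * (1 - int (theta2 (Suc n - k)))) = ?c (Suc n)"
    using part_a[of "Suc n"] by (simp add: atLeast0AtMost lessThan_Suc_atMost)
  finally show ?case using Suc.IH by simp
qed

theorem corollary10:
  fixes n :: nat
  assumes "n \<ge> 1"
  shows "int (cl_b n) = (\<Sum>k=0..n-1. int (cl_b k) * (1 - int (theta2 (n - k))))
         \<and> (\<Sum>k=0..n. int (cl_b k) * (1 - int (h (n - k)))) = 1"
proof
  have "{0..n-1} = {..<n}" using assms by auto
  then show "int (cl_b n) = (\<Sum>k=0..n-1. int (cl_b k) * (1 - int (theta2 (n - k))))"
    using part_a[OF assms] by simp
  show "(\<Sum>k=0..n. int (cl_b k) * (1 - int (h (n - k)))) = 1" by (rule part_b)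
qed

end
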